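(* With $w=\sqrt{(u+1)^2-4}$, $$\sum_{n\ge0}\Bigl(\sum_{\sigma\in\mathfrak S_{n+1}}u^{{\rm rda}(\sigma)}\alpha^{{\rm LRmin}(\sigma)-1}\beta^{{\rm RLmin}(\sigma)-1}\Bigr)\frac{t^n}{n!}=e^{\frac{(\beta-\alpha)(u-1)}{2}t}\left(\frac{w}{w\cosh\bigl(\frac{wt}{2}\bigr)-(1+u)\sinh\bigl(\frac{wt}{2}\bigr)}\right)^{\alpha+\beta}.$$
   Context: For $\sigma=\sigma_1\cdots\sigma_m\in\mathfrak S_m$: ${\rm rda}(\sigma)$ is the number of $i$ with $1<i\le m$ and $\sigma_{i-1}<\sigma_i<\sigma_{i+1}$ (convention $\sigma_{m+1}=+\infty$); ${\rm LRmin}(\sigma)$ is the number of $i$ with $\sigma_j>\sigma_i$ for all $j<i$; ${\rm RLmin}(\sigma)$ is the number of $i$ with $\sigma_j>\sigma_i$ for all $j>i$. Identity of formal power series in $t$; the bracketed base has constant term $1$, only even powers of $w$ occur, and $G^c:=\exp(c\log G)$. *)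

theory Defs
  imports "HOL-Computational_Algebra.Formal_Power_Series" "HOL-Combinatorics.Multiset_Permutations"
begin

(* Permutations of {1..m} are lists s = [s!0, ..., s!(m-1)]; position i (1-based) is s!(i-1). *)

(* rda: number of i with 1 < i <= m and s_{i-1} < s_i < s_{i+1}, convention s_{m+1} = +infinity *)
definition rda :: "nat list \<Rightarrow> nat" where
  "rda s = card {i. 1 \<le> i \<and> i < length s \<and> s ! (i - 1) < s ! i \<and>
                     (i + 1 = length s \<or> s ! i < s ! (i + 1))}"

definition LRmin :: "nat list \<Rightarrow> nat" where
  "LRmin s = card {i. i < length s \<and> (\<forall>j<i. s ! j > s ! i)}"

definition RLmin :: "nat list \<Rightarrow> nat" where
  "RLmin s = card {i. i < length s \<and> (\<forall>j. i < j \<and> j < length s \<longrightarrow> s ! j > s ! i)}"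

(* G^c := exp(c log G) for a formal power series G with constant term 1 *)
definition fps_powr :: "'a::field_char_0 fps \<Rightarrow> 'a \<Rightarrow> 'a fps" where
  "fps_powr G c = fps_exp 1 oo (fps_const c * (fps_ln 1 oo (G - 1)))"

(* cosh(w t/2), written with only even powers of w, where W2 = w^2 *)
definition cosh_half :: "'a::field_char_0 \<Rightarrow> 'a fps" where
  "cosh_half W2 = Abs_fps (\<lambda>n. if even n then W2 ^ (n div 2) / (2 ^ n * fact n) else 0)"

(* sinh(w t/2) / w, written with only even powers of w, where W2 = w^2 *)
definition sinh_half_div :: "'a::field_char_0 \<Rightarrow> 'a fps" where
  "sinh_half_div W2 = Abs_fps (\<lambda>n. if odd n then W2 ^ (n div 2) / (2 ^ n * fact n) else 0)"

end

theory Submission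
  imports Defs
begin


fun dar :: "bool \<Rightarrow> bool \<Rightarrow> nat list \<Rightarrow> nat" where
  "dar l r [] = 0"
| "dar l r [x] = (if l \<and> r then 1 else 0)"
| "dar l r (x#y#zs) = (if l \<and> x<y then 1 else 0) + dar (x<y) r (y#zs)"

definition idx :: "bool \<Rightarrow> bool \<Rightarrow> nat list \<Rightarrow> nat set" where
  "idx l r xs = {i. i < length xs \<and> (if i = 0 then l else xs!(i-1) < xs!i)
      \<and> (if Suc i = length xs then r else xs!i < xs!Suc i)}"

lemma idx_step: "idx l r (x#y#zs) = (if l \<and> x<y then {0} else {}) \<union> Suc ` idx (x<y) r (y#zs)"
proof -
  have "i \<in> idx l r (x#y#zs) \<longleftrightarrow> i \<in> (if l \<and> x<y then {0} else {}) \<union> Suc ` idx (x<y) r (y#zs)" for i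
  proof (cases i)
    case 0 then show ?thesis by (simp add: idx_def image_iff)
  next
    case (Suc j) 
    have "Suc j \<in> Suc ` idx (x<y) r (y#zs) \<longleftrightarrow> j \<in> idx (x<y) r (y#zs)" by (rule inj_image_mem_iff) simp
    then show ?thesis using Suc
      by (cases j) (simp_all add: idx_def)
  qed
  then show ?thesis by blast
qed
lemma card_idx: "card (idx l r xs) = dar l r xs"
proof (induction l r xs rule: dar.induct)
  case (1 l r) then show ?case by (simp add: idx_def)
next
  case (2 l r x)
  have "idx l r [x] = (if l \<and> r then {0} else {})" by (auto simp: idx_def)
  then show ?case by simp
next
  case (3 l r x y zs)
  have fin: "finite (idx a b c)" for a b c by (simp add: idx_def)
  have "card (idx l r (x#y#zs)) = card (if l \<and> x<y then {0::nat} else {}) + card (Suc ` idx (x<y) r (y#zs))"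
    unfolding idx_step by (rule card_Un_disjoint) (auto simp: fin)
  also have "\<dots> = (if l \<and> x<y then 1 else 0) + dar (x<y) r (y#zs)"
    using 3 by (simp add: card_image)
  finally show ?case by simp
qed

lemma rda_dar: "rda s = dar False True s"
proof -
  have "{i. 1 \<le> i \<and> i < length s \<and> s ! (i - 1) < s ! i \<and>
                     (i + 1 = length s \<or> s ! i < s ! (i + 1))} = idx False True s"
    by (auto simp: idx_def)
  then show ?thesis by (simp add: rda_def card_idx)
qed

lemma dar_append:
  assumes "\<forall>z\<in>set L \<union> set R. m < z"
  shows "dar l r (L @ m # R) = dar l False L + (if L = [] \<and> l \<and> (R \<noteq> [] \<or> r) then 1 else 0) + dar True r R"
  using assms
proof (induction l False L rule: dar.induct)
  case (1 l)
  then show ?case by (cases R) auto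
next
  case (2 l x)
  then show ?case by (cases R) auto
next
  case (3 l x y zs)
  then show ?case by simp
qed

lemma dar_map:
  assumes "\<forall>x\<in>set xs. \<forall>y\<in>set xs. (g x < g y) = (x < y)"
  shows "dar l r (map g xs) = dar l r xs"
  using assms by (induction l r xs rule: dar.induct) auto

lemma LRmin_map:
  assumes "\<forall>x\<in>set xs. \<forall>y\<in>set xs. (g x < g y) = (x < y)"
  shows "LRmin (map g xs) = LRmin xs"
proof -
  have "{i. i < length (map g xs) \<and> (\<forall>j<i. map g xs ! j > map g xs ! i)} = {i. i < length xs \<and> (\<forall>j<i. xs ! j > xs ! i)}"
    using assms by auto
  then show ?thesis by (simp add: LRmin_def)
qed

lemma RLmin_map:
  assumes "\<forall>x\<in>set xs. \<forall>y\<in>set xs. (g x < g y) = (x < y)"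
  shows "RLmin (map g xs) = RLmin xs"
proof -
  have "{i. i < length (map g xs) \<and> (\<forall>j. i < j \<and> j < length (map g xs) \<longrightarrow> map g xs ! j > map g xs ! i)}
     = {i. i < length xs \<and> (\<forall>j. i < j \<and> j < length xs \<longrightarrow> xs ! j > xs ! i)}"
    using assms by auto
  then show ?thesis by (simp add: RLmin_def)
qed


lemma nth_mid: "(L @ m # R) ! Suc (length L + k) = R ! k" "(L @ m # R) ! (length L + Suc k) = R ! k"
  by (simp_all add: nth_append)

lemma LRmin_append:
  assumes mz: "\<forall>z\<in>set L \<union> set R. m < z"
  shows "LRmin (L @ m # R) = Suc (LRmin L)"
proof -
  let ?s = "L @ m # R"
  have eq: "{i. i < length ?s \<and> (\<forall>j<i. ?s!j > ?s!i)} = insert (length L) {i. i < length L \<and> (\<forall>j<i. L!j > L!i)}"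
  proof (intro set_eqI iffI)
    fix i assume "i \<in> {i. i < length ?s \<and> (\<forall>j<i. ?s!j > ?s!i)}"
    then have i: "i < length ?s" and h: "\<forall>j<i. ?s!j > ?s!i" by auto
    show "i \<in> insert (length L) {i. i < length L \<and> (\<forall>j<i. L!j > L!i)}"
    proof (cases "i \<le> length L")
      case True
      show ?thesis
      proof (cases "i = length L")
        case False
        with True have "i < length L" by simp
        then show ?thesis using h by (auto simp: nth_append)
      qed simp
    next
      case False
      then obtain k where k: "i = length L + Suc k" by (intro that[of "i - Suc (length L)"]) simp
      have "?s ! (length L) > ?s ! i" using h[rule_format, of "length L"] k by simp
      moreover have "?s ! i = R ! k" using k by (simp add: nth_mid)
      moreover have "k < length R" using i k by simp
      ultimately have "m > R!k" by simp
      with mz \<open>k < length R\<close> show ?thesis by (meson UnI2 not_less_iff_gr_or_eq nth_mem)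
    qed
  next
    fix i assume "i \<in> insert (length L) {i. i < length L \<and> (\<forall>j<i. L!j > L!i)}"
    then show "i \<in> {i. i < length ?s \<and> (\<forall>j<i. ?s!j > ?s!i)}"
    proof
      assume "i = length L"
      then show ?thesis using mz by (auto simp: nth_append)
    next
      assume "i \<in> {i. i < length L \<and> (\<forall>j<i. L!j > L!i)}"
      then show ?thesis by (auto simp: nth_append)
    qed
  qed
  have "finite {i. i < length L \<and> (\<forall>j<i. L!j > L!i)}" by simp
  then show ?thesis unfolding LRmin_def eq by (simp add: card_insert_if)
qed

lemma RLmin_append:
  assumes mz: "\<forall>z\<in>set L \<union> set R. m < z"
  shows "RLmin (L @ m # R) = Suc (RLmin R)"
proof -
  let ?s = "L @ m # R"
  let ?SR = "{i. i < length R \<and> (\<forall>j. i < j \<and> j < length R \<longrightarrow> R ! j > R ! i)}"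
  have eq: "{i. i < length ?s \<and> (\<forall>j. i < j \<and> j < length ?s \<longrightarrow> ?s ! j > ?s ! i)}
     = insert (length L) ((\<lambda>k. length L + Suc k) ` ?SR)"
  proof (intro set_eqI iffI)
    fix i assume "i \<in> {i. i < length ?s \<and> (\<forall>j. i < j \<and> j < length ?s \<longrightarrow> ?s ! j > ?s ! i)}"
    then have i: "i < length ?s" and h: "\<forall>j. i < j \<and> j < length ?s \<longrightarrow> ?s ! j > ?s ! i" by auto
    show "i \<in> insert (length L) ((\<lambda>k. length L + Suc k) ` ?SR)"
    proof (cases "i \<le> length L")
      case True
      show ?thesis
      proof (cases "i = length L")
        case False
        with True have il: "i < length L" by simp
        have "?s ! length L > ?s ! i" using h[rule_format, of "length L"] il by simp
        then have "m > L ! i" using il by (simp add: nth_append)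
        with mz il show ?thesis by (meson UnI1 not_less_iff_gr_or_eq nth_mem)
      qed simp
    next
      case False
      then obtain k where k: "i = length L + Suc k" by (intro that[of "i - Suc (length L)"]) simp
      have kl: "k < length R" using i k by simp
      have "k \<in> ?SR"
      proof -
        have "R ! j > R ! k" if "k < j" "j < length R" for j
        proof -
          have "?s ! (length L + Suc j) > ?s ! (length L + Suc k)" using h k that by simp
          then show ?thesis by (simp add: nth_mid)
        qed
        then show ?thesis using kl by auto
      qed
      then show ?thesis using k by blast
    qed
  next
    fix i assume "i \<in> insert (length L) ((\<lambda>k. length L + Suc k) ` ?SR)"
    then show "i \<in> {i. i < length ?s \<and> (\<forall>j. i < j \<and> j < length ?s \<longrightarrow> ?s ! j > ?s ! i)}"
    proof
      assume il: "i = length L"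
      have "?s ! j > m" if "length L < j" "j < length ?s" for j
      proof -
        have jl: "length L < j" by fact
        obtain k where k: "j = length L + Suc k" by (rule that[of "j - Suc (length L)"]) (use jl in simp)
        have "k < length R" using that k by simp
        then have "R ! k > m" using mz by auto
        then show ?thesis using k by (simp add: nth_mid)
      qed
      then show ?thesis using il by auto
    next
      assume "i \<in> (\<lambda>k. length L + Suc k) ` ?SR"
      then obtain k where k: "i = length L + Suc k" and kS: "k \<in> ?SR" by auto
      have "?s ! j > ?s ! i" if "i < j" "j < length ?s" for j
      proof -
        obtain k' where k': "j = length L + Suc k'" by (rule that[of "j - Suc (length L)"]) (use \<open>i < j\<close> k in simp)
        have "k < k'" "k' < length R" using that k k' by auto
        then have "R ! k' > R ! k" using kS by auto
        then show ?thesis using k k' by (simp add: nth_mid)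
      qed
      then show ?thesis using kS k by auto
    qed
  qed
  have "finite ?SR" by simp
  moreover have "length L \<notin> (\<lambda>k. length L + Suc k) ` ?SR" by auto
  moreover have "inj (\<lambda>k. length L + Suc k)" by (simp add: inj_def)
  ultimately show ?thesis unfolding RLmin_def eq by (simp add: card_image inj_on_def)
qed



definition Wt :: "(nat list \<Rightarrow> complex) \<Rightarrow> nat set \<Rightarrow> complex" where
  "Wt f A = (\<Sum>\<sigma>\<in>permutations_of_set A. f \<sigma>)"

definition oinv :: "(nat list \<Rightarrow> complex) \<Rightarrow> bool" where
  "oinv f \<longleftrightarrow> (\<forall>xs g. (\<forall>x\<in>set xs. \<forall>y\<in>set xs. (g x < g y) = (x < y)) \<longrightarrow> f (map g xs) = f xs)"

lemma Wt_card:
  assumes fin: "finite A" and f: "oinv f"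
  shows "Wt f A = Wt f {0..<card A}"
proof -
  obtain xs where xs: "sorted_wrt (<) xs" "set xs = A"
    using ex1_sorted_list_for_set_if_finite[OF fin] by blast
  have dxs: "distinct xs" using xs(1) by (simp add: strict_sorted_iff)
  have len: "length xs = card A" using dxs xs(2) distinct_card by fastforce
  define g where "g = (\<lambda>i. xs ! i)"
  have mono: "g i < g j" if "i < j" "j < card A" for i j
    using sorted_wrt_nth_less[OF xs(1) that(1)] that(2) len by (simp add: g_def)
  have ord: "(g i < g j) = (i < j)" if "i < card A" "j < card A" for i j
    using mono[of i j] mono[of j i] that by (metis less_asym' linorder_neqE_nat)
  have inj: "inj_on g {0..<card A}"
  proof (rule inj_onI)
    fix x y assume x: "x \<in> {0..<card A}" and y: "y \<in> {0..<card A}" and e: "g x = g y"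
    show "x = y"
    proof (rule ccontr)
      assume "x \<noteq> y"
      then have "x < y \<or> y < x" by arith
      then show False using ord[of x y] ord[of y x] x y e by auto
    qed
  qed
  have img: "g ` {0..<card A} = A"
  proof -
    have "g ` {0..<length xs} = set xs" unfolding g_def by (auto simp: in_set_conv_nth image_iff) (metis atLeastLessThan_iff zero_le)
    then show ?thesis using xs(2) len by simp
  qed
  have P: "permutations_of_set A = map g ` permutations_of_set {0..<card A}"
    using permutations_of_set_image_inj[OF inj] img by simp
  have injm: "inj_on (map g) (permutations_of_set {0..<card A})"
  proof (rule inj_onI)
    fix a b assume a: "a \<in> permutations_of_set {0..<card A}" and b: "b \<in> permutations_of_set {0..<card A}"
      and e: "map g a = map g b"
    have "set a \<union> set b \<subseteq> {0..<card A}" using a b by (auto simp: permutations_of_set_def)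
    then have "inj_on g (set a \<union> set b)" using inj inj_on_subset by blast
    then show "a = b" using map_inj_on[OF e] by blast
  qed
  have "Wt f A = (\<Sum>\<sigma>\<in>permutations_of_set {0..<card A}. f (map g \<sigma>))"
    unfolding Wt_def P by (simp add: sum.reindex[OF injm])
  also have "\<dots> = Wt f {0..<card A}"
    unfolding Wt_def
  proof (rule sum.cong[OF refl])
    fix \<sigma> assume s: "\<sigma> \<in> permutations_of_set {0..<card A}"
    then have "set \<sigma> = {0..<card A}" by (simp add: permutations_of_set_def)
    then have "\<forall>x\<in>set \<sigma>. \<forall>y\<in>set \<sigma>. (g x < g y) = (x < y)" using ord by auto
    then show "f (map g \<sigma>) = f \<sigma>" using f by (simp add: oinv_def)
  qed
  finally show ?thesis .
qed

lemma sum_Pow_card: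
  assumes "finite A"
  shows "(\<Sum>B\<in>Pow A. (F (card B) :: complex)) = (\<Sum>k\<le>card A. of_nat (card A choose k) * F k)"
proof -
  have "(\<Sum>B\<in>Pow A. F (card B)) = (\<Sum>k\<le>card A. \<Sum>B\<in>{B. B \<in> Pow A \<and> card B = k}. F (card B))"
    by (rule sum.group[symmetric]) (use assms in \<open>auto intro: card_mono\<close>)
  also have "\<dots> = (\<Sum>k\<le>card A. of_nat (card A choose k) * F k)"
  proof (rule sum.cong[OF refl])
    fix k
    have "(\<Sum>B\<in>{B. B \<in> Pow A \<and> card B = k}. F (card B)) = (\<Sum>B\<in>{B. B \<subseteq> A \<and> card B = k}. F k)"
      by (rule sum.cong) auto
    also have "\<dots> = of_nat (card A choose k) * F k" using n_subsets[OF assms, of k] by simp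
    finally show "(\<Sum>B\<in>{B. B \<in> Pow A \<and> card B = k}. F (card B)) = of_nat (card A choose k) * F k" .
  qed
  finally show ?thesis .
qed


lemma Wt_split:
  assumes fin: "finite A" and mA: "\<forall>z\<in>A. m < z" and g1: "oinv g1" and g2: "oinv g2"
    and fe: "\<And>L R. set L \<union> set R = A \<Longrightarrow> f (L @ m # R) = c (length L) * g1 L * g2 R"
  shows "Wt f (insert m A) = (\<Sum>k\<le>card A. of_nat (card A choose k) * (c k * Wt g1 {0..<k} * Wt g2 {0..<card A - k}))"
proof -
  define S where "S = Sigma (Pow A) (\<lambda>B. permutations_of_set B \<times> permutations_of_set (A - B))"
  define h where "h = (\<lambda>(B::nat set,(L::nat list,R::nat list)). L @ m # R)"
  have mnA: "m \<notin> A" using mA by auto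
  have bij: "bij_betw h S (permutations_of_set (insert m A))"
  proof (rule bij_betw_imageI)
    show "inj_on h S"
    proof (rule inj_onI)
      fix x y assume x: "x \<in> S" and y: "y \<in> S" and e: "h x = h y"
      obtain B L R where xe: "x = (B,(L,R))" by (cases x) auto
      obtain B' L' R' where ye: "y = (B',(L',R'))" by (cases y) auto
      have sx: "set L = B" "set R = A - B" "B \<subseteq> A" using x xe by (auto simp: S_def permutations_of_set_def)
      have sy: "set L' = B'" "set R' = A - B'" "B' \<subseteq> A" using y ye by (auto simp: S_def permutations_of_set_def)
      have "L @ m # R = L' @ m # R'" using e xe ye by (simp add: h_def)
      moreover have "m \<notin> set L" "m \<notin> set R" using sx mnA by auto
      ultimately have "L = L' \<and> R = R'" using append_Cons_eq_iff by metis
      then show "x = y" using xe ye sx sy by auto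
    qed
  next
    show "h ` S = permutations_of_set (insert m A)"
    proof (intro set_eqI iffI)
      fix \<sigma> assume "\<sigma> \<in> h ` S"
      then obtain B L R where s: "(B,(L,R)) \<in> S" and se: "\<sigma> = L @ m # R" by (auto simp: h_def)
      have sx: "set L = B" "set R = A - B" "B \<subseteq> A" "distinct L" "distinct R"
        using s by (auto simp: S_def permutations_of_set_def)
      show "\<sigma> \<in> permutations_of_set (insert m A)"
        using sx mnA by (auto simp: se permutations_of_set_def)
    next
      fix \<sigma> assume s: "\<sigma> \<in> permutations_of_set (insert m A)"
      then have ss: "set \<sigma> = insert m A" "distinct \<sigma>" by (auto simp: permutations_of_set_def)
      then obtain L R where se: "\<sigma> = L @ m # R" by (metis insertI1 split_list)
      have dd: "distinct L" "distinct R" "m \<notin> set L" "m \<notin> set R" "set L \<inter> set R = {}" using ss(2) se by auto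
      have st: "set L \<union> set R = A" using ss(1) se dd mnA by auto
      have "(set L, (L, R)) \<in> S"
        using dd st by (auto simp: S_def permutations_of_set_def)
      then show "\<sigma> \<in> h ` S" unfolding se h_def by force
    qed
  qed
  have "Wt f (insert m A) = (\<Sum>x\<in>S. f (h x))"
    unfolding Wt_def by (rule sum.reindex_bij_betw[OF bij, symmetric])
  also have "\<dots> = (\<Sum>B\<in>Pow A. \<Sum>p\<in>permutations_of_set B \<times> permutations_of_set (A - B). f (h (B,p)))"
  proof -
    have "(\<Sum>B\<in>Pow A. \<Sum>p\<in>permutations_of_set B \<times> permutations_of_set (A - B). f (h (B,p)))
        = (\<Sum>(B,p)\<in>S. f (h (B,p)))" unfolding S_def by (rule sum.Sigma) (use fin in auto)
    also have "\<dots> = (\<Sum>x\<in>S. f (h x))" by (rule sum.cong) auto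
    finally show ?thesis by simp
  qed
  also have "\<dots> = (\<Sum>B\<in>Pow A. c (card B) * Wt g1 B * Wt g2 (A - B))"
  proof (rule sum.cong[OF refl])
    fix B assume B: "B \<in> Pow A"
    have "(\<Sum>p\<in>permutations_of_set B \<times> permutations_of_set (A - B). f (h (B,p)))
        = (\<Sum>p\<in>permutations_of_set B \<times> permutations_of_set (A - B). c (card B) * g1 (fst p) * g2 (snd p))"
    proof (rule sum.cong[OF refl])
      fix p assume p: "p \<in> permutations_of_set B \<times> permutations_of_set (A - B)"
      obtain L R where pe: "p = (L,R)" by (cases p)
      have "set L = B" "set R = A - B" using p pe by (auto simp: permutations_of_set_def)
      moreover have "length L = card B" using p pe by (auto intro: length_finite_permutations_of_set)
      ultimately show "f (h (B,p)) = c (card B) * g1 (fst p) * g2 (snd p)"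
        using B fe[of L R] by (auto simp: pe h_def)
    qed
    also have "\<dots> = c (card B) * Wt g1 B * Wt g2 (A - B)"
    proof -
      have "(\<Sum>p\<in>permutations_of_set B \<times> permutations_of_set (A - B). g1 (fst p) * g2 (snd p))
         = (\<Sum>x\<in>permutations_of_set B. \<Sum>y\<in>permutations_of_set (A - B). g1 x * g2 y)"
        by (subst sum.cartesian_product) (simp add: case_prod_beta)
      also have "\<dots> = Wt g1 B * Wt g2 (A - B)" unfolding Wt_def by (rule sum_product[symmetric])
      finally show ?thesis by (simp add: mult.assoc sum_distrib_left[symmetric])
    qed
    finally show "(\<Sum>p\<in>permutations_of_set B \<times> permutations_of_set (A - B). f (h (B,p))) = c (card B) * Wt g1 B * Wt g2 (A - B)" .
  qed
  also have "\<dots> = (\<Sum>B\<in>Pow A. c (card B) * Wt g1 {0..<card B} * Wt g2 {0..<card A - card B})"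
  proof (rule sum.cong[OF refl])
    fix B assume B: "B \<in> Pow A"
    then have fB: "finite B" "finite (A - B)" using fin finite_subset by auto
    have "card (A - B) = card A - card B" using B fin by (simp add: card_Diff_subset finite_subset)
    then show "c (card B) * Wt g1 B * Wt g2 (A - B) = c (card B) * Wt g1 {0..<card B} * Wt g2 {0..<card A - card B}"
      using Wt_card[OF fB(1) g1] Wt_card[OF fB(2) g2] by simp
  qed
  also have "\<dots> = (\<Sum>k\<le>card A. of_nat (card A choose k) * (c k * Wt g1 {0..<k} * Wt g2 {0..<card A - k}))"
    by (rule sum_Pow_card[OF fin])
  finally show ?thesis .
qed



definition wS :: "complex \<Rightarrow> nat list \<Rightarrow> complex" where "wS u L = u ^ dar True False L"
definition wP :: "complex \<Rightarrow> complex \<Rightarrow> nat list \<Rightarrow> complex" where "wP u a L = u ^ dar False False L * a ^ LRmin L"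
definition wQ :: "complex \<Rightarrow> complex \<Rightarrow> nat list \<Rightarrow> complex" where "wQ u b L = u ^ dar True True L * b ^ RLmin L"
definition wA :: "complex \<Rightarrow> complex \<Rightarrow> complex \<Rightarrow> nat list \<Rightarrow> complex" where
  "wA u a b \<sigma> = u ^ rda \<sigma> * a ^ (LRmin \<sigma> - 1) * b ^ (RLmin \<sigma> - 1)"

lemma oinv_wS: "oinv (wS u)" by (simp add: oinv_def wS_def dar_map)
lemma oinv_wP: "oinv (wP u a)" by (simp add: oinv_def wP_def dar_map LRmin_map)
lemma oinv_wQ: "oinv (wQ u b)" by (simp add: oinv_def wQ_def dar_map RLmin_map)

lemma Wt_empty: "Wt f {0..<0} = f []" by (simp add: Wt_def)

lemma LRmin_Nil: "LRmin [] = 0" by (simp add: LRmin_def)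
lemma RLmin_Nil: "RLmin [] = 0" by (simp add: RLmin_def)

lemma shift_set: "insert (0::nat) {1..<Suc n} = {0..<Suc n}" "card {1..<Suc n} = n" "\<forall>z\<in>{1..<Suc n}. 0 < z"
  by auto

lemma mz_of: "set L \<union> set R = A \<Longrightarrow> \<forall>z\<in>A. m < z \<Longrightarrow> \<forall>z\<in>set L \<union> set R. m < z" by auto

lemma recA: "(\<Sum>\<sigma>\<in>permutations_of_set {1..n+1}. wA u a b \<sigma>)
   = (\<Sum>k\<le>n. of_nat (n choose k) * (1 * Wt (wP u a) {0..<k} * Wt (wQ u b) {0..<n - k}))"
proof -
  have e: "{1..n+1} = insert (1::nat) {2..n+1}" by auto
  have "Wt (wA u a b) (insert 1 {2..n+1}) = (\<Sum>k\<le>card {2..n+1}. of_nat (card {2..n+1} choose k) * ((\<lambda>_. 1) k * Wt (wP u a) {0..<k} * Wt (wQ u b) {0..<card {2..n+1} - k}))"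
  proof (rule Wt_split[OF _ _ oinv_wP oinv_wQ])
    fix L R assume h: "set L \<union> set R = {2..n+1}"
    have mz: "\<forall>z\<in>set L \<union> set R. (1::nat) < z" using h by auto
    show "wA u a b (L @ 1 # R) = (\<lambda>_. 1) (length L) * wP u a L * wQ u b R"
      using dar_append[OF mz, of False True] LRmin_append[OF mz] RLmin_append[OF mz]
      by (simp add: wA_def wP_def wQ_def rda_dar power_add)
  qed auto
  then show ?thesis unfolding e Wt_def by simp
qed

lemma recP: "Wt (wP u a) {0..<Suc n}
   = (\<Sum>k\<le>n. of_nat (n choose k) * (a * Wt (wP u a) {0..<k} * Wt (wS u) {0..<n - k}))"
proof -
  have "Wt (wP u a) (insert 0 {1..<Suc n}) = (\<Sum>k\<le>card {1..<Suc n}. of_nat (card {1..<Suc n} choose k) * ((\<lambda>_. a) k * Wt (wP u a) {0..<k} * Wt (wS u) {0..<card {1..<Suc n} - k}))"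
  proof (rule Wt_split[OF _ _ oinv_wP oinv_wS])
    fix L R assume h: "set L \<union> set R = {1..<Suc n}"
    have mz: "\<forall>z\<in>set L \<union> set R. (0::nat) < z" using h by auto
    show "wP u a (L @ 0 # R) = (\<lambda>_. a) (length L) * wP u a L * wS u R"
      using dar_append[OF mz, of False False] LRmin_append[OF mz]
      by (simp add: wP_def wS_def power_add)
  qed auto
  then show ?thesis using shift_set by simp
qed

lemma recQ: "Wt (wQ u b) {0..<Suc n}
   = (\<Sum>k\<le>n. of_nat (n choose k) * ((b * (if k = 0 then u else 1)) * Wt (wS u) {0..<k} * Wt (wQ u b) {0..<n - k}))"
proof -
  have "Wt (wQ u b) (insert 0 {1..<Suc n}) = (\<Sum>k\<le>card {1..<Suc n}. of_nat (card {1..<Suc n} choose k) * ((\<lambda>k. b * (if k = 0 then u else 1)) k * Wt (wS u) {0..<k} * Wt (wQ u b) {0..<card {1..<Suc n} - k}))"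
  proof (rule Wt_split[OF _ _ oinv_wS oinv_wQ])
    fix L R assume h: "set L \<union> set R = {1..<Suc n}"
    have mz: "\<forall>z\<in>set L \<union> set R. (0::nat) < z" using h by auto
    show "wQ u b (L @ 0 # R) = (\<lambda>k. b * (if k = 0 then u else 1)) (length L) * wS u L * wQ u b R"
      using dar_append[OF mz, of True True] RLmin_append[OF mz]
      by (cases "L = []") (simp_all add: wQ_def wS_def power_add)
  qed auto
  then show ?thesis using shift_set by simp
qed

lemma recS: "Wt (wS u) {0..<Suc n}
   = (\<Sum>k\<le>n. of_nat (n choose k) * ((if k = 0 \<and> n \<noteq> 0 then u else 1) * Wt (wS u) {0..<k} * Wt (wS u) {0..<n - k}))"
proof -
  have "Wt (wS u) (insert 0 {1..<Suc n}) = (\<Sum>k\<le>card {1..<Suc n}. of_nat (card {1..<Suc n} choose k) * ((\<lambda>k. if k = 0 \<and> n \<noteq> 0 then u else 1) k * Wt (wS u) {0..<k} * Wt (wS u) {0..<card {1..<Suc n} - k}))"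
  proof (rule Wt_split[OF _ _ oinv_wS oinv_wS])
    fix L R assume h: "set L \<union> set R = {1..<Suc n}"
    have mz: "\<forall>z\<in>set L \<union> set R. (0::nat) < z" using h by auto
    have "L = [] \<Longrightarrow> (R \<noteq> []) = (n \<noteq> 0)" using h by (cases n) auto
    then show "wS u (L @ 0 # R) = (\<lambda>k. if k = 0 \<and> n \<noteq> 0 then u else 1) (length L) * wS u L * wS u R"
      using dar_append[OF mz, of True False]
      by (cases "L = []") (simp_all add: wS_def power_add)
  qed auto
  then show ?thesis using shift_set by simp
qed



lemma egf_mult:
  fixes x y :: "nat \<Rightarrow> complex"
  shows "Abs_fps (\<lambda>n. (\<Sum>k\<le>n. of_nat (n choose k) * (x k * y (n - k))) / fact n)
       = Abs_fps (\<lambda>n. x n / fact n) * Abs_fps (\<lambda>n. y n / fact n)"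
proof (rule fps_ext)
  fix n
  have "fps_nth (Abs_fps (\<lambda>n. x n / fact n) * Abs_fps (\<lambda>n. y n / fact n)) n = (\<Sum>k=0..n. x k / fact k * (y (n-k) / fact (n-k)))"
    by (simp add: fps_mult_nth)
  also have "\<dots> = (\<Sum>k\<le>n. of_nat (n choose k) * (x k * y (n - k))) / fact n"
    unfolding atMost_atLeast0 sum_divide_distrib
    by (rule sum.cong) (auto simp: binomial_fact field_simps)
  finally show "fps_nth (Abs_fps (\<lambda>n. (\<Sum>k\<le>n. of_nat (n choose k) * (x k * y (n - k))) / fact n)) n
     = fps_nth (Abs_fps (\<lambda>n. x n / fact n) * Abs_fps (\<lambda>n. y n / fact n)) n" by simp
qed

lemma egf_deriv:
  fixes x :: "nat \<Rightarrow> complex"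
  shows "fps_deriv (Abs_fps (\<lambda>n. x n / fact n)) = Abs_fps (\<lambda>n. x (Suc n) / fact n)"
proof (rule fps_ext)
  fix n
  have "of_nat (Suc n) * (x (Suc n) / fact (Suc n)) = x (Suc n) / (fact n :: complex)"
    by (simp add: fact_Suc del: of_nat_Suc)
  then show "fps_nth (fps_deriv (Abs_fps (\<lambda>n. x n / fact n))) n = fps_nth (Abs_fps (\<lambda>n. x (Suc n) / fact n)) n" by simp
qed

lemma egf_const:
  fixes x :: "nat \<Rightarrow> complex"
  shows "Abs_fps (\<lambda>n. c * x n / fact n) = fps_const c * Abs_fps (\<lambda>n. x n / fact n)"
  by (rule fps_ext) simp

lemma lin_unique:
  fixes X K :: "complex fps"
  assumes d: "fps_deriv X = X * K" and z: "fps_nth X 0 = 0"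
  shows "X = 0"
proof -
  have "\<forall>m\<le>n. fps_nth X m = 0" for n
  proof (induction n)
    case 0 then show ?case using z by simp
  next
    case (Suc n)
    have "of_nat (Suc n) * fps_nth X (Suc n) = fps_nth (X * K) n"
      using arg_cong[OF d, of "\<lambda>f. fps_nth f n"] by simp
    also have "\<dots> = (\<Sum>i=0..n. fps_nth X i * fps_nth K (n - i))" by (simp add: fps_mult_nth)
    also have "\<dots> = 0" using Suc.IH by (intro sum.neutral) auto
    finally have "of_nat (Suc n) * fps_nth X (Suc n) = 0" .
    moreover have "of_nat (Suc n) \<noteq> (0::complex)" by (simp only: of_nat_eq_0_iff)
    ultimately have "fps_nth X (Suc n) = 0" by (metis mult_eq_0_iff)
    with Suc.IH show ?case by (auto simp: le_Suc_eq)
  qed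
  then show ?thesis by (intro fps_ext) auto
qed

lemma lin_unique2:
  fixes X Y K :: "complex fps"
  assumes "fps_deriv X = X * K" "fps_deriv Y = Y * K" "fps_nth X 0 = fps_nth Y 0"
  shows "X = Y"
proof -
  have "fps_deriv (X - Y) = (X - Y) * K" using assms by (simp add: algebra_simps)
  then have "X - Y = 0" by (rule lin_unique) (use assms in simp)
  then show ?thesis by simp
qed

lemma ric_unique:
  fixes X Y :: "complex fps" and a b :: "complex fps"
  assumes "fps_deriv X = X * X + a * X + b" "fps_deriv Y = Y * Y + a * Y + b" "fps_nth X 0 = fps_nth Y 0"
  shows "X = Y"
proof -
  have "fps_deriv (X - Y) = (X - Y) * (X + Y + a)" using assms by (simp add: algebra_simps)
  then have "X - Y = 0" by (rule lin_unique) (use assms in simp)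
  then show ?thesis by simp
qed

lemma aux1: fixes m a p W w :: complex assumes "m \<noteq> 0" "a \<noteq> 0" "p \<noteq> 0"
  shows "m * (W * w / (2 * p * (m * a))) = W / 2 * (w / (p * a))" using assms by (simp add: field_simps)

lemma aux2: fixes m a p w :: complex assumes "m \<noteq> 0" "a \<noteq> 0" "p \<noteq> 0"
  shows "m * (w / (2 * p * (m * a))) = 1 / 2 * (w / (p * a))" using assms by (simp add: field_simps)

lemma cosh_deriv: "fps_deriv (cosh_half W) = fps_const (W / 2) * sinh_half_div (W::complex)"
proof (rule fps_ext)
  fix n
  show "fps_nth (fps_deriv (cosh_half W)) n = fps_nth (fps_const (W / 2) * sinh_half_div W) n"
  proof (cases "even n")
    case True then show ?thesis by (simp add: cosh_half_def sinh_half_div_def)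
  next
    case False
    then obtain k where k: "n = 2 * k + 1" using oddE by blast
    have L: "fps_nth (fps_deriv (cosh_half W)) n = of_nat (Suc (Suc (2*k))) * (W^Suc k / (2^(Suc (Suc (2*k))) * fact (Suc (Suc (2*k)))))"
      using k by (simp add: cosh_half_def)
    have R: "fps_nth (fps_const (W / 2) * sinh_half_div W) n = W/2 * (W^k/(2^(Suc (2*k)) * fact (Suc (2*k))))"
      using k by (simp add: sinh_half_div_def)
    have m: "of_nat (Suc (Suc (2*k))) \<noteq> (0::complex)" by (simp only: of_nat_eq_0_iff)
    show ?thesis unfolding L R
      by (simp only: fact_Suc[of "Suc (2*k)"] power_Suc) (rule aux1[OF m fact_nonzero]; simp)
  qed
qed

lemma sinh_deriv: "fps_deriv (sinh_half_div W) = fps_const (1 / 2) * cosh_half (W::complex)"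
proof (rule fps_ext)
  fix n
  show "fps_nth (fps_deriv (sinh_half_div W)) n = fps_nth (fps_const (1 / 2) * cosh_half W) n"
  proof (cases "even n")
    case False then show ?thesis by (simp add: cosh_half_def sinh_half_div_def)
  next
    case True
    then obtain k where k: "n = 2 * k" using evenE by blast
    have L: "fps_nth (fps_deriv (sinh_half_div W)) n = of_nat (Suc (2*k)) * (W^k / (2^(Suc (2*k)) * fact (Suc (2*k))))"
      using k by (simp add: sinh_half_div_def)
    have R: "fps_nth (fps_const (1 / 2) * cosh_half W) n = 1/2 * (W^k/(2^(2*k) * fact (2*k)))"
      using k by (simp add: cosh_half_def)
    have m: "of_nat (Suc (2*k)) \<noteq> (0::complex)" by (simp only: of_nat_eq_0_iff)
    show ?thesis unfolding L R
      by (simp only: fact_Suc[of "2*k"] power_Suc) (rule aux2[OF m fact_nonzero]; simp)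
  qed
qed



lemma ric_alg:
  fixes D D1 D2 I h e w a b :: "'a::idom"
  assumes "D2 = w * D" "D * I = 1" "h*h + e = w" "a = h + h" "b = - e"
  shows "-(D2 + h*D1) * I + (-(D1 + h*D)) * (-D1 * (I*I)) = (-(D1 + h*D) * I) * (-(D1 + h*D) * I) + a * (-(D1 + h*D) * I) + b"
  using assms by algebra

lemma lg_alg:
  fixes D D1 I h :: "'a::idom"
  assumes "D * I = 1"
  shows "D * (-D1 * (I*I)) = -(D1 + h*D) * I + h"
  using assms by algebra

lemma S_ric:
  fixes u :: complex
  defines "S \<equiv> Abs_fps (\<lambda>n. Wt (wS u) {0..<n} / fact n)"
  shows "fps_deriv S = S * S + fps_const (u - 1) * S + fps_const (1 - u)"
proof -
  let ?s = "\<lambda>n. Wt (wS u) {0..<n}"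
  have s0: "?s 0 = 1" by (simp add: Wt_def wS_def)
  have s0': "Wt (wS u) {} = 1" by (simp add: Wt_def wS_def)
  have rec: "?s (Suc n) = (\<Sum>k\<le>n. of_nat (n choose k) * (?s k * ?s (n - k))) + (if n \<noteq> 0 then (u - 1) * ?s n else 0)" for n
  proof -
    have "?s (Suc n) = (\<Sum>k\<le>n. of_nat (n choose k) * (?s k * ?s (n - k)) + (if k = 0 then (if n \<noteq> 0 then (u - 1) * ?s n else 0) else 0))"
      unfolding recS by (rule sum.cong) (auto simp: s0 s0' algebra_simps)
    also have "\<dots> = (\<Sum>k\<le>n. of_nat (n choose k) * (?s k * ?s (n - k))) + (if n \<noteq> 0 then (u - 1) * ?s n else 0)"
      by (simp add: sum.distrib)
    finally show ?thesis .
  qed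
  have "fps_deriv S = Abs_fps (\<lambda>n. (\<Sum>k\<le>n. of_nat (n choose k) * (?s k * ?s (n - k))) / fact n)
        + Abs_fps (\<lambda>n. (if n \<noteq> 0 then (u - 1) * ?s n else 0) / fact n)"
    unfolding S_def egf_deriv rec by (rule fps_ext) (simp add: add_divide_distrib)
  also have "\<dots> = S * S + (fps_const (u - 1) * S + fps_const (1 - u))"
    unfolding egf_mult[of ?s ?s] S_def by (rule arg_cong2[where f="(+)", OF refl], rule fps_ext) (simp add: s0 s0')
  finally show ?thesis by (simp add: add.assoc)
qed


lemma P_deriv:
  fixes u a :: complex
  defines "P \<equiv> Abs_fps (\<lambda>n. Wt (wP u a) {0..<n} / fact n)"
  defines "S \<equiv> Abs_fps (\<lambda>n. Wt (wS u) {0..<n} / fact n)"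
  shows "fps_deriv P = fps_const a * (P * S)"
proof -
  let ?p = "\<lambda>n. Wt (wP u a) {0..<n}"
  let ?s = "\<lambda>n. Wt (wS u) {0..<n}"
  have rec: "?p (Suc n) = a * (\<Sum>k\<le>n. of_nat (n choose k) * (?p k * ?s (n - k)))" for n
    unfolding recP sum_distrib_left by (rule sum.cong) (simp_all add: algebra_simps)
  have "fps_deriv P = Abs_fps (\<lambda>n. a * (\<Sum>k\<le>n. of_nat (n choose k) * (?p k * ?s (n - k))) / fact n)"
    unfolding P_def egf_deriv rec ..
  also have "\<dots> = fps_const a * (P * S)"
    unfolding egf_const egf_mult[of ?p ?s] P_def S_def ..
  finally show ?thesis .
qed

lemma Q_deriv:
  fixes u b :: complex
  defines "Q \<equiv> Abs_fps (\<lambda>n. Wt (wQ u b) {0..<n} / fact n)"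
  defines "S \<equiv> Abs_fps (\<lambda>n. Wt (wS u) {0..<n} / fact n)"
  shows "fps_deriv Q = fps_const b * ((S + fps_const (u - 1)) * Q)"
proof -
  let ?q = "\<lambda>n. Wt (wQ u b) {0..<n}"
  let ?s = "\<lambda>n. (if n = 0 then u else 1) * Wt (wS u) {0..<n}"
  have rec: "?q (Suc n) = b * (\<Sum>k\<le>n. of_nat (n choose k) * (?s k * ?q (n - k)))" for n
    unfolding recQ sum_distrib_left by (rule sum.cong) (simp_all add: algebra_simps)
  have "fps_deriv Q = Abs_fps (\<lambda>n. b * (\<Sum>k\<le>n. of_nat (n choose k) * (?s k * ?q (n - k))) / fact n)"
    unfolding Q_def egf_deriv rec ..
  also have "\<dots> = fps_const b * (Abs_fps (\<lambda>n. ?s n / fact n) * Q)"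
    unfolding egf_const egf_mult[of ?s ?q] Q_def ..
  also have "Abs_fps (\<lambda>n. ?s n / fact n) = S + fps_const (u - 1)"
    unfolding S_def by (rule fps_ext) (simp add: Wt_def wS_def)
  finally show ?thesis .
qed

lemma LHS_eq:
  fixes u \<alpha> \<beta> :: complex
  shows "Abs_fps (\<lambda>n. (\<Sum>\<sigma>\<in>permutations_of_set {1..n+1}.
            u ^ rda \<sigma> * \<alpha> ^ (LRmin \<sigma> - 1) * \<beta> ^ (RLmin \<sigma> - 1)) / fact n)
       = Abs_fps (\<lambda>n. Wt (wP u \<alpha>) {0..<n} / fact n) * Abs_fps (\<lambda>n. Wt (wQ u \<beta>) {0..<n} / fact n)"
proof -
  have e: "(\<lambda>\<sigma>. u ^ rda \<sigma> * \<alpha> ^ (LRmin \<sigma> - 1) * \<beta> ^ (RLmin \<sigma> - 1)) = wA u \<alpha> \<beta>"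
    by (rule ext) (simp add: wA_def)
  show ?thesis
    unfolding e recA egf_mult[of "\<lambda>n. Wt (wP u \<alpha>) {0..<n}" "\<lambda>n. Wt (wQ u \<beta>) {0..<n}", symmetric] by simp
qed



lemma D_facts:
  fixes u :: complex
  defines "W2 \<equiv> (u + 1)^2 - 4"
  defines "D \<equiv> cosh_half W2 - fps_const (1 + u) * sinh_half_div W2"
  shows "fps_nth D 0 = 1" "fps_nth (fps_deriv D) 0 = - (1 + u) / 2"
    "fps_deriv (fps_deriv D) = fps_const (W2 / 4) * D"
proof -
  show "fps_nth D 0 = 1" by (simp add: D_def cosh_half_def sinh_half_div_def)
  show "fps_nth (fps_deriv D) 0 = - (1 + u) / 2" by (simp add: D_def cosh_half_def sinh_half_div_def field_simps)
  show "fps_deriv (fps_deriv D) = fps_const (W2 / 4) * D"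
    unfolding D_def by (rule fps_ext) (simp add: cosh_deriv sinh_deriv algebra_simps)
qed

lemma V_eq_S:
  fixes u :: complex
  defines "W2 \<equiv> (u + 1)^2 - 4"
  defines "D \<equiv> cosh_half W2 - fps_const (1 + u) * sinh_half_div W2"
  defines "h \<equiv> (u - 1) / 2"
  shows "Abs_fps (\<lambda>n. Wt (wS u) {0..<n} / fact n) = -(fps_deriv D + fps_const h * D) * inverse D"
proof -
  let ?D1 = "fps_deriv D" let ?I = "inverse D"
  define V where "V = -(?D1 + fps_const h * D) * ?I"
  have D0: "fps_nth D 0 = 1" and D10: "fps_nth ?D1 0 = - (1 + u) / 2" and D2: "fps_deriv ?D1 = fps_const (W2 / 4) * D"
    using D_facts[of u] by (simp_all add: W2_def D_def)
  have DI: "D * ?I = 1" using D0 by (intro inverse_mult_eq_1') simp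
  have dI: "fps_deriv ?I = - ?D1 * (?I * ?I)" using fps_inverse_deriv[of D] D0 by (simp add: power2_eq_square)
  have dV: "fps_deriv V = -(fps_deriv ?D1 + fps_const h * ?D1) * ?I + (-(?D1 + fps_const h * D)) * (- ?D1 * (?I * ?I))"
    unfolding V_def by (simp add: dI algebra_simps)
  have hh: "fps_const h * fps_const h + fps_const (u - 1) = fps_const (W2 / 4)"
  proof -
    have "h * h + (u - 1) = W2 / 4" by (simp add: h_def W2_def field_simps power2_eq_square) 
    then show ?thesis by (metis fps_const_add fps_const_mult)
  qed
  have ric: "fps_deriv V = V * V + fps_const (u - 1) * V + fps_const (1 - u)"
    by (subst dV, unfold V_def, rule ric_alg[OF D2 DI hh]) (simp_all add: h_def fps_const_add[symmetric] fps_const_neg)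
  have V0: "fps_nth V 0 = 1"
  proof -
    have D11: "fps_nth D (Suc 0) = - (1 + u) / 2" using D10 by simp
    show ?thesis by (simp add: V_def D0 D11 h_def field_simps)
  qed
  have S0: "fps_nth (Abs_fps (\<lambda>n. Wt (wS u) {0..<n} / fact n)) 0 = 1" by (simp add: Wt_def wS_def)
  show ?thesis
    using ric_unique[OF S_ric[of u] ric] S0 V0 by (simp add: V_def)
qed



theorem theorem4p6:
  fixes u \<alpha> \<beta> :: complex
  shows "Abs_fps (\<lambda>n. (\<Sum>\<sigma>\<in>permutations_of_set {1..n+1}.
            u ^ rda \<sigma> * \<alpha> ^ (LRmin \<sigma> - 1) * \<beta> ^ (RLmin \<sigma> - 1)) / fact n)
       = fps_exp ((\<beta> - \<alpha>) * (u - 1) / 2) *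
         fps_powr (inverse (cosh_half ((u + 1)^2 - 4) - fps_const (1 + u) * sinh_half_div ((u + 1)^2 - 4)))
                  (\<alpha> + \<beta>)"
proof -
  define W2 where "W2 = (u+1)^2 - 4"
  define D where "D = cosh_half W2 - fps_const (1 + u) * sinh_half_div W2"
  define h where "h = (u-1)/2"
  define c0 where "c0 = (\<beta> - \<alpha>) * (u - 1) / 2"
  define \<gamma> where "\<gamma> = \<alpha> + \<beta>"
  define S where "S = Abs_fps (\<lambda>n. Wt (wS u) {0..<n} / fact n)"
  define P where "P = Abs_fps (\<lambda>n. Wt (wP u \<alpha>) {0..<n} / fact n)"
  define Q where "Q = Abs_fps (\<lambda>n. Wt (wQ u \<beta>) {0..<n} / fact n)"
  define H where "H = inverse D - 1"
  define M where "M = fps_const \<gamma> * (fps_ln 1 oo H)"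
  define G where "G = fps_exp 1 oo M"
  have D0: "fps_nth D 0 = 1" using D_facts[of u] by (simp add: D_def W2_def)
  have DI: "D * inverse D = 1" using D0 by (intro inverse_mult_eq_1') simp
  have H0: "fps_nth H 0 = 0" using D0 by (simp add: H_def)
  have M0: "fps_nth M 0 = 0" by (simp add: M_def fps_ln_nth)
  have RHS: "fps_exp ((\<beta> - \<alpha>) * (u - 1) / 2) *
         fps_powr (inverse (cosh_half ((u + 1)^2 - 4) - fps_const (1 + u) * sinh_half_div ((u + 1)^2 - 4))) (\<alpha> + \<beta>)
       = fps_exp c0 * G"
    by (simp add: fps_powr_def G_def M_def H_def D_def W2_def \<gamma>_def c0_def)
  have SV: "S = -(fps_deriv D + fps_const h * D) * inverse D"
    unfolding S_def D_def h_def W2_def by (rule V_eq_S)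
  have dH: "fps_deriv H = - fps_deriv D * (inverse D * inverse D)"
    using fps_inverse_deriv[of D] D0 by (simp add: H_def power2_eq_square)
  have comp: "inverse (1 + fps_X) oo H = D"
  proof -
    have "inverse (1 + fps_X) oo H = inverse ((1 + fps_X) oo H)"
      by (rule fps_inverse_compose[OF H0]) simp
    also have "(1 + fps_X) oo H = 1 + H"
      by (simp add: fps_compose_add_distrib fps_X_fps_compose_startby0[OF H0])
    also have "1 + H = inverse D" by (simp add: H_def)
    also have "inverse (inverse D) = D" using D0 by simp
    finally show ?thesis .
  qed
  have dLg: "fps_deriv (fps_ln 1 oo H) = S + fps_const h"
  proof -
    have "fps_deriv (fps_ln 1 oo H) = (fps_deriv (fps_ln 1) oo H) * fps_deriv H"
      by (rule fps_compose_deriv[OF H0])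
    also have "fps_deriv (fps_ln 1) = (inverse (1 + fps_X) :: complex fps)" by (simp add: fps_ln_deriv)
    also have "(inverse (1 + fps_X) oo H) * fps_deriv H = D * (- fps_deriv D * (inverse D * inverse D))"
      by (simp add: comp dH)
    also have "\<dots> = S + fps_const h" unfolding SV by (rule lg_alg[OF DI])
    finally show ?thesis .
  qed
  have dG: "fps_deriv G = G * (fps_const \<gamma> * (S + fps_const h))"
  proof -
    have "fps_deriv G = (fps_deriv (fps_exp 1) oo M) * fps_deriv M"
      unfolding G_def by (rule fps_compose_deriv[OF M0])
    also have "fps_deriv (fps_exp (1::complex)) = fps_exp 1" by simp
    also have "fps_deriv M = fps_const \<gamma> * (S + fps_const h)" by (simp add: M_def dLg)
    finally show ?thesis by (simp add: G_def)
  qed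
  define K where "K = fps_const \<alpha> * S + fps_const \<beta> * (S + fps_const (u - 1))"
  have K: "fps_const c0 + fps_const \<gamma> * (S + fps_const h) = K"
    unfolding K_def by (rule fps_ext) (auto simp: c0_def \<gamma>_def h_def field_simps)
  have dY: "fps_deriv (fps_exp c0 * G) = (fps_exp c0 * G) * K"
    unfolding K[symmetric] by (simp add: dG algebra_simps)
  have dPQ: "fps_deriv (P * Q) = (P * Q) * K"
    unfolding K_def P_def Q_def S_def
    by (simp add: P_deriv[of u \<alpha>] Q_deriv[of u \<beta>] algebra_simps)
  have P0: "fps_nth P 0 = 1" by (simp add: P_def Wt_def wP_def LRmin_Nil)
  have Q0: "fps_nth Q 0 = 1" by (simp add: Q_def Wt_def wQ_def RLmin_Nil)
  have G0: "fps_nth G 0 = 1" by (simp add: G_def)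
  have "P * Q = fps_exp c0 * G" by (rule lin_unique2[OF dPQ dY]) (simp add: P0 Q0 G0)
  then show ?thesis unfolding RHS LHS_eq P_def Q_def .
qed

end
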